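(* For every response $y$, $$\mathbb{E}_N\big[(\hat\pi_N(y|x))^2\big]=\frac{(\phi_\beta(y|x))^2}{1-e^{-n}}\int_0^\infty\!\!\int_0^\infty\big(n+n^2\Phi_\beta(s_1)\Phi_\beta(s_2)\big)(\pi_{\mathrm{gen}}(y|x))^2e^{-(s_1+s_2)\phi_\beta(y|x)}\exp\big(n[\Phi_\beta(s_1)\Phi_\beta(s_2)-1]\big)\,ds_1\,ds_2.$$
   Context: Fix a prompt $x$, a countable response space $\mathcal{Y}$, conditional distributions $\pi_{\mathrm{target}}$ and $\pi_{\mathrm{gen}}$ (full support), a reward $r$, and $\beta>0$. Let $\phi_\beta(y|x)=\frac{\pi_{\mathrm{target}}(y|x)}{\pi_{\mathrm{gen}}(y|x)}e^{\beta r(y|x)}$ and $\Phi_\beta(s)=\mathbb{E}_{Y\sim\pi_{\mathrm{gen}}(\cdot|x)}[e^{-s\phi_\beta(Y|x)}]$ for $s\ge0$. Let $N\sim\mathrm{Poi}(n)|_{>0}$ (Poisson with mean $n$ conditioned to be positive) and, given $N$, let $Y_1,\dots,Y_N$ be i.i.d. from $\pi_{\mathrm{gen}}(\cdot|x)$; $N_y$ is the number of $j$ with $Y_j=y$ and $Z=\sum_{j=1}^N\phi_\beta(Y_j|x)$. Define $\hat\pi_N(y|x)=\mathbb{E}[N_y\phi_\beta(y|x)/Z\mid N]$. *)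

theory Defs
  imports "HOL-Probability.Probability"
begin

text \<open>The prompt x is fixed throughout, so conditional distributions on x are
  represented simply as pmfs on the countable response type 'y.\<close>

definition phi_beta :: "'y pmf \<Rightarrow> 'y pmf \<Rightarrow> ('y \<Rightarrow> real) \<Rightarrow> real \<Rightarrow> 'y \<Rightarrow> real" where
  "phi_beta pt pg r \<beta> y = pmf pt y / pmf pg y * exp (\<beta> * r y)"

definition Phi_beta :: "'y pmf \<Rightarrow> 'y pmf \<Rightarrow> ('y \<Rightarrow> real) \<Rightarrow> real \<Rightarrow> real \<Rightarrow> real" where
  "Phi_beta pt pg r \<beta> s =
     measure_pmf.expectation pg (\<lambda>Y. exp (- s * phi_beta pt pg r \<beta> Y))"

definition N_dist :: "real \<Rightarrow> nat pmf" where
  "N_dist n = cond_pmf (poisson_pmf n) {k. 0 < k}"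

text \<open>Given N = k, the samples Y_0..Y_{k-1} are iid from pg (a random function on {..<k}).
  pihat k y = E[ N_y * phi(y) / Z | N = k ], with N_y = #{j<k. Y_j = y}, Z = sum_j phi(Y_j).\<close>
definition pihat :: "'y pmf \<Rightarrow> 'y pmf \<Rightarrow> ('y \<Rightarrow> real) \<Rightarrow> real \<Rightarrow> nat \<Rightarrow> 'y \<Rightarrow> real" where
  "pihat pt pg r \<beta> k y =
     measure_pmf.expectation (Pi_pmf {..<k} undefined (\<lambda>_. pg))
       (\<lambda>Y. real (card {j\<in>{..<k}. Y j = y}) * phi_beta pt pg r \<beta> y
             / (\<Sum>j<k. phi_beta pt pg r \<beta> (Y j)))"

end

theory Submission
  imports Defs
begin


lemma exp_int:
  fixes c :: real assumes c: "c > 0"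
  shows "has_bochner_integral lborel (\<lambda>s. indicator {0..} s * exp (- s * c)) (1 / c)"
proof (rule has_bochner_integral_nn_integral)
  have "(\<integral>\<^sup>+ s. ennreal (indicator {0..} s * exp (- s * c)) \<partial>lborel)
      = (\<integral>\<^sup>+ s. ennreal (1/c) * ennreal (erlang_density 0 c s * s ^ 0) \<partial>lborel)"
    using c by (intro nn_integral_cong) (auto simp: erlang_density_def ennreal_mult'[symmetric] indicator_def mult_ac)
  also have "\<dots> = ennreal (1/c) * (\<integral>\<^sup>+ s. ennreal (erlang_density 0 c s * s ^ 0) \<partial>lborel)"
    by (rule nn_integral_cmult) auto
  also have "\<dots> = ennreal (1/c)"
    using nn_integral_erlang_ith_moment[OF c, of 0 0] by simp
  finally show "(\<integral>\<^sup>+ s. ennreal (indicator {0..} s * exp (- s * c)) \<partial>lborel) = ennreal (1/c)" .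
qed (use c in auto)

lemma exp_int_bound:
  fixes c B :: real and h :: "real \<Rightarrow> real"
  assumes c: "c > 0" and [measurable]: "h \<in> borel_measurable borel"
    and b: "\<And>s. s \<ge> 0 \<Longrightarrow> \<bar>h s\<bar> \<le> B * exp (- s * c)"
  shows "integrable lborel (\<lambda>s. indicator {0..} s * h s)"
proof -
  have i: "integrable lborel (\<lambda>s. B * (indicator {0..} s * exp (- s * c)))"
    using exp_int[OF c] by (intro integrable_mult_right) (auto simp: has_bochner_integral_iff)
  show ?thesis
  proof (rule Bochner_Integration.integrable_bound[OF i])
    show "AE x in lborel. norm (indicator {0..} x * h x) \<le> norm (B * (indicator {0..} x * exp (- x * c)))"
      using b by (auto simp: indicator_def intro!: AE_I2 order.trans[OF _ abs_ge_self])
  qed measurable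
qed

definition PhiF :: "'y pmf \<Rightarrow> ('y \<Rightarrow> real) \<Rightarrow> real \<Rightarrow> real" where
  "PhiF pg f s = measure_pmf.expectation pg (\<lambda>Y. exp (- s * f Y))"

lemma PhiF_meas[measurable]: "PhiF pg f \<in> borel_measurable borel"
proof -
  have [measurable]: "f \<in> borel_measurable (count_space UNIV)" by simp
  have "(\<lambda>s. \<integral>Y. exp (- s * f Y) \<partial>measure_pmf pg) \<in> borel_measurable borel"
    by (intro measure_pmf.borel_measurable_lebesgue_integral) measurable
  then show ?thesis unfolding PhiF_def[abs_def] .
qed

lemma exp_integrable:
  fixes f :: "'y \<Rightarrow> real" and s :: real
  assumes "\<And>z. f z \<ge> 0" "s \<ge> 0"
  shows "integrable (measure_pmf pg) (\<lambda>Y. exp (- s * f Y))"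
proof (rule measure_pmf.integrable_const_bound[where B=1])
  show "AE x in measure_pmf pg. norm (exp (- s * f x)) \<le> 1"
  proof (intro AE_I2)
    fix x have "0 \<le> s * f x" by (rule mult_nonneg_nonneg[OF assms(2) assms(1)[of x]])
    then show "norm (exp (- s * f x)) \<le> 1" by simp
  qed
qed simp

lemma PhiF_bounds:
  assumes "\<And>z. f z \<ge> 0" "s \<ge> 0"
  shows "0 \<le> PhiF pg f s" "PhiF pg f s \<le> 1"
proof -
  show "0 \<le> PhiF pg f s" unfolding PhiF_def by (intro Bochner_Integration.integral_nonneg) auto
  have "PhiF pg f s \<le> measure_pmf.expectation pg (\<lambda>Y. 1)" unfolding PhiF_def
    by (intro integral_mono exp_integrable assms) (use assms in \<open>auto intro!: mult_nonneg_nonneg\<close>)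
  then show "PhiF pg f s \<le> 1" by simp
qed

lemma pmf_expectation_sums:
  fixes q :: "nat pmf" and F :: "nat \<Rightarrow> real"
  assumes "\<And>k. \<bar>F k\<bar> \<le> B"
  shows "(\<lambda>k. pmf q k * F k) sums (measure_pmf.expectation q F)"
proof -
  have int: "integrable (measure_pmf q) F"
    by (rule measure_pmf.integrable_const_bound[where B=B]) (use assms in auto)
  have "integrable (count_space UNIV) (\<lambda>k. pmf q k *\<^sub>R F k)"
    using int unfolding measure_pmf_eq_density by (subst (asm) integrable_density) auto
  then have "(\<lambda>k. pmf q k *\<^sub>R F k) sums integral\<^sup>L (count_space UNIV) (\<lambda>k. pmf q k *\<^sub>R F k)"
    by (rule sums_integral_count_space_nat)
  also have "integral\<^sup>L (count_space UNIV) (\<lambda>k. pmf q k *\<^sub>R F k) = measure_pmf.expectation q F"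
    unfolding measure_pmf_eq_density by (subst integral_density) auto
  finally show ?thesis by simp
qed

lemma pmf_N_dist:
  assumes n: "n > 0"
  shows "pmf (N_dist n) k = (if k > 0 then n ^ k / fact k * exp (- n) / (1 - exp (- n)) else 0)"
proof -
  have ne: "set_pmf (poisson_pmf n) \<inter> {k. 0 < k} \<noteq> {}" using n by auto
  have "measure_pmf.prob (poisson_pmf n) {k. 0 < k} = measure_pmf.prob (poisson_pmf n) (space (measure_pmf (poisson_pmf n)) - {0})"
    by (intro arg_cong[where f="measure_pmf.prob _"]) auto
  also have "\<dots> = 1 - exp (- n)"
    by (subst measure_pmf.prob_compl) (use n in \<open>auto simp: measure_pmf_single\<close>)
  finally show ?thesis
    unfolding N_dist_def using pmf_cond[OF ne] n by simp
qed

lemma sums_k_exp: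
  fixes z :: real
  shows "(\<lambda>k. real k * z ^ k / fact k) sums (z * exp z)"
proof -
  have "(\<lambda>k. z * (z ^ k / fact k)) sums (z * exp z)"
    using exp_converges[of z] by (intro sums_mult) (simp add: divide_inverse mult_ac)
  moreover have "z * (z ^ k / fact k) = real (Suc k) * z ^ Suc k / fact (Suc k)" for k
  proof -
    have "real (Suc k) * z ^ Suc k / fact (Suc k) = (real (Suc k) * z ^ Suc k) / (real (Suc k) * fact k)"
      by (simp only: fact_Suc of_nat_mult)
    also have "\<dots> = z ^ Suc k / fact k" by (rule mult_divide_mult_cancel_left) simp
    finally show ?thesis by simp
  qed
  ultimately have "(\<lambda>k. real (Suc k) * z ^ Suc k / fact (Suc k)) sums (z * exp z)" by simp
  then show ?thesis using sums_Suc_iff[of "\<lambda>k. real k * z ^ k / fact k" "z * exp z"] by simp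
qed

lemma sums_k2:
  fixes n x :: real
  shows "(\<lambda>k. real k ^ 2 * n ^ k / fact k * x ^ (k - 1)) sums ((n + n\<^sup>2 * x) * exp (n * x))"
proof -
  have "(\<lambda>k. n * ((n*x) ^ k / fact k) + n * (real k * (n*x) ^ k / fact k)) sums (n * exp (n*x) + n * ((n*x) * exp (n*x)))"
    using exp_converges[of "n*x"] sums_k_exp[of "n*x"]
    by (intro sums_add sums_mult) (simp_all add: divide_inverse mult_ac)
  moreover have "n * ((n*x) ^ k / fact k) + n * (real k * (n*x) ^ k / fact k)
      = real (Suc k) ^ 2 * n ^ Suc k / fact (Suc k) * x ^ (Suc k - 1)" for k
  proof -
    have "real (Suc k) ^ 2 * n ^ Suc k / fact (Suc k) = (real (Suc k) * (real (Suc k) * n ^ Suc k)) / (real (Suc k) * fact k)"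
      by (simp only: fact_Suc of_nat_mult power2_eq_square mult.assoc)
    also have "\<dots> = real (Suc k) * n ^ Suc k / fact k" by (rule mult_divide_mult_cancel_left) simp
    finally have e: "real (Suc k) ^ 2 * n ^ Suc k / fact (Suc k) = real (Suc k) * n ^ Suc k / fact k" .
    have "real (Suc k)^2 * n^Suc k / fact (Suc k) * x^(Suc k - 1) = real (Suc k) * n^Suc k / fact k * x^k"
      using e by simp
    then show ?thesis by (simp add: field_simps power_mult_distrib)
  qed
  moreover have "n * exp (n*x) + n * ((n*x) * exp (n*x)) = (n + n\<^sup>2 * x) * exp (n * x)"
    by (simp add: algebra_simps power2_eq_square)
  ultimately have "(\<lambda>k. real (Suc k) ^ 2 * n ^ Suc k / fact (Suc k) * x ^ (Suc k - 1)) sums ((n + n\<^sup>2 * x) * exp (n * x))"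
    by simp
  then show ?thesis using sums_Suc_iff[of "\<lambda>k. real k ^ 2 * n ^ k / fact k * x ^ (k - 1)" "(n + n\<^sup>2 * x) * exp (n * x)"] by simp
qed



lemma h_bound:
  fixes f :: "'y \<Rightarrow> real" and s :: real
  assumes "\<And>z. f z \<ge> 0" "s \<ge> 0"
  shows "\<bar>(if b then 0 else 1) * exp (- s * f z)\<bar> \<le> 1"
proof -
  have "0 \<le> s * f z" by (rule mult_nonneg_nonneg[OF assms(2) assms(1)[of z]])
  then show ?thesis by auto
qed

lemma exp_cnt:
  fixes f :: "'y \<Rightarrow> real" and s :: real
  assumes f0: "\<And>z. f z \<ge> 0" and s: "s \<ge> 0"
  shows "measure_pmf.expectation (Pi_pmf {..<k} d (\<lambda>_. pg))
      (\<lambda>Y. real (card {j\<in>{..<k}. Y j = y}) * exp (- s * (\<Sum>j<k. f (Y j))))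
    = real k * (pmf pg y * exp (- s * f y)) * PhiF pg f s ^ (k - 1)"
proof -
  define h where "h j i z = (if i = j \<and> z \<noteq> y then 0 else 1) * exp (- s * f z)" for j i :: nat and z
  have hb: "\<bar>h j i z\<bar> \<le> 1" for j i z
    unfolding h_def by (rule h_bound[OF f0 s])
  have hint: "integrable (measure_pmf pg) (h j i)" for j i
    by (rule measure_pmf.integrable_const_bound[where B=1]) (use hb in auto)
  have pt: "real (card {j\<in>{..<k}. Y j = y}) * exp (- s * (\<Sum>j<k. f (Y j)))
      = (\<Sum>j<k. \<Prod>i<k. h j i (Y i))" for Y
  proof -
    have "real (card {j\<in>{..<k}. Y j = y}) = (\<Sum>j\<in>{j\<in>{..<k}. Y j = y}. 1)" by simp
    also have "\<dots> = (\<Sum>j<k. if Y j = y then 1 else 0)" by (subst sum.inter_filter) auto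
    finally have c: "real (card {j\<in>{..<k}. Y j = y}) = (\<Sum>j<k. if Y j = y then 1 else 0)" .
    have e: "exp (- s * (\<Sum>j<k. f (Y j))) = (\<Prod>i<k. exp (- s * f (Y i)))"
      by (simp add: sum_distrib_left exp_sum[symmetric])
    have p: "(\<Prod>i<k. h j i (Y i)) = (if Y j = y then 1 else 0) * (\<Prod>i<k. exp (- s * f (Y i)))" if "j < k" for j
    proof -
      have "(\<Prod>i<k. h j i (Y i)) = (\<Prod>i<k. (if i = j then (if Y j = y then 1 else 0) else 1)) * (\<Prod>i<k. exp (- s * f (Y i)))"
        unfolding h_def prod.distrib[symmetric] by (intro prod.cong) auto
      also have "(\<Prod>i<k. (if i = j then (if Y j = y then 1 else 0) else 1)) = (if Y j = y then 1 else 0)"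
        using that by (subst prod.delta) auto
      finally show ?thesis .
    qed
    show ?thesis unfolding c e sum_distrib_right by (intro sum.cong) (auto simp: p)
  qed
  have "measure_pmf.expectation (Pi_pmf {..<k} d (\<lambda>_. pg))
      (\<lambda>Y. real (card {j\<in>{..<k}. Y j = y}) * exp (- s * (\<Sum>j<k. f (Y j))))
    = (\<Sum>j<k. measure_pmf.expectation (Pi_pmf {..<k} d (\<lambda>_. pg)) (\<lambda>Y. \<Prod>i<k. h j i (Y i)))"
    unfolding pt by (intro Bochner_Integration.integral_sum integrable_prod_Pi_pmf hint) auto
  also have "\<dots> = (\<Sum>j<k. \<Prod>i<k. measure_pmf.expectation pg (h j i))"
  proof (intro sum.cong refl)
    fix j
    show "measure_pmf.expectation (Pi_pmf {..<k} d (\<lambda>_. pg)) (\<lambda>Y. \<Prod>i<k. h j i (Y i))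
        = (\<Prod>i<k. measure_pmf.expectation pg (h j i))"
      by (rule expectation_prod_Pi_pmf) (simp, rule hint, simp add: h_def)
  qed
  also have "\<dots> = (\<Sum>j<k. (pmf pg y * exp (- s * f y)) * PhiF pg f s ^ (k - 1))"
  proof (intro sum.cong refl)
    fix j assume j: "j \<in> {..<k}"
    have ej: "measure_pmf.expectation pg (h j j) = pmf pg y * exp (- s * f y)"
    proof -
      have "h j j = (\<lambda>z. exp (- s * f y) * indicator {y} z)"
        by (auto simp: h_def fun_eq_iff indicator_def)
      then show ?thesis by (simp add: measure_pmf_single)
    qed
    have ei: "measure_pmf.expectation pg (h j i) = PhiF pg f s" if "i \<noteq> j" for i
    proof -
      have "h j i = (\<lambda>z. exp (- s * f z))" using that by (auto simp: h_def fun_eq_iff)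
      then show ?thesis by (simp add: PhiF_def)
    qed
    have "(\<Prod>i<k. measure_pmf.expectation pg (h j i))
        = measure_pmf.expectation pg (h j j) * (\<Prod>i\<in>{..<k}-{j}. measure_pmf.expectation pg (h j i))"
      using j by (subst prod.remove[of _ j]) auto
    also have "(\<Prod>i\<in>{..<k}-{j}. measure_pmf.expectation pg (h j i)) = (\<Prod>i\<in>{..<k}-{j}. PhiF pg f s)"
      by (intro prod.cong refl ei) auto
    also have "\<dots> = PhiF pg f s ^ (k - 1)"
      using j by (simp add: card_Diff_singleton)
    finally show "(\<Prod>i<k. measure_pmf.expectation pg (h j i)) = (pmf pg y * exp (- s * f y)) * PhiF pg f s ^ (k - 1)"
      using ej by simp
  qed
  also have "\<dots> = real k * (pmf pg y * exp (- s * f y)) * PhiF pg f s ^ (k - 1)"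
    by simp
  finally show ?thesis .
qed



lemma pihat_formula:
  fixes f :: "'y \<Rightarrow> real" and pg :: "'y pmf" and y :: 'y and k :: nat
  assumes f0: "\<And>z. f z \<ge> 0" and fy: "f y > 0"
  shows "measure_pmf.expectation (Pi_pmf {..<k} d (\<lambda>_. pg))
       (\<lambda>Y. real (card {j\<in>{..<k}. Y j = y}) * f y / (\<Sum>j<k. f (Y j)))
     = f y * real k * pmf pg y * (\<integral>s. indicator {0..} s * (exp (- s * f y) * PhiF pg f s ^ (k-1)) \<partial>lborel)"
proof -
  define M where "M = measure_pmf (Pi_pmf {..<k} d (\<lambda>_. pg))"
  define cnt where "cnt Y = real (card {j\<in>{..<k}. Y j = y})" for Y :: "nat \<Rightarrow> 'y"
  define Z where "Z Y = (\<Sum>j<k. f (Y j))" for Y :: "nat \<Rightarrow> 'y"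
  define G where "G Y s = indicator {0..} s * (cnt Y * f y * exp (- s * Z Y))" for Y s
  have Zge: "cnt Y * f y \<le> Z Y" for Y
  proof -
    have "cnt Y * f y = (\<Sum>j\<in>{j\<in>{..<k}. Y j = y}. f (Y j))" unfolding cnt_def by simp
    also have "\<dots> \<le> Z Y" unfolding Z_def by (intro sum_mono2) (auto intro: f0)
    finally show ?thesis .
  qed
  have cnt0: "cnt Y \<ge> 0" for Y unfolding cnt_def by simp
  have inner: "has_bochner_integral lborel (G Y) (cnt Y * f y / Z Y)" for Y
  proof (cases "cnt Y = 0")
    case True
    then have "G Y = (\<lambda>s. 0)" by (auto simp: G_def fun_eq_iff)
    then show ?thesis using True by (simp add: has_bochner_integral_zero)
  next
    case False
    then have "cnt Y \<ge> 1" unfolding cnt_def by (auto simp: Suc_le_eq card_gt_0_iff)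
    then have "Z Y > 0" using Zge[of Y] fy by (smt (verit) mult_le_cancel_right1)
    from has_bochner_integral_mult_right[OF exp_int[OF this], of "cnt Y * f y"]
    have "has_bochner_integral lborel (\<lambda>s. cnt Y * f y * (indicator {0..} s * exp (- s * Z Y))) (cnt Y * f y * (1 / Z Y))" .
    moreover have "(\<lambda>s. cnt Y * f y * (indicator {0..} s * exp (- s * Z Y))) = G Y"
      by (auto simp: G_def fun_eq_iff)
    ultimately show ?thesis by simp
  qed
  have meas[measurable]: "(\<lambda>(Y, s). G Y s) \<in> borel_measurable (M \<Otimes>\<^sub>M lborel)"
  proof -
    have [measurable]: "cnt \<in> borel_measurable M" "Z \<in> borel_measurable M" by (simp_all add: M_def)
    show ?thesis unfolding G_def by measurable
  qed
  have ps: "pair_sigma_finite M lborel"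
    unfolding pair_sigma_finite_def M_def
    by (simp add: lborel.sigma_finite_measure_axioms measure_pmf.sigma_finite_measure_axioms)
  have bnd: "cnt Y * f y / Z Y \<le> 1" for Y
    using Zge[of Y] mult_nonneg_nonneg[OF cnt0[of Y] less_imp_le[OF fy]] by (cases "Z Y = 0") (auto simp: divide_le_eq)
  have Z0: "Z Y \<ge> 0" for Y
    using Zge[of Y] mult_nonneg_nonneg[OF cnt0[of Y] less_imp_le[OF fy]] by linarith
  have integ: "integrable (M \<Otimes>\<^sub>M lborel) (\<lambda>(Y, s). G Y s)"
  proof (rule pair_sigma_finite.Fubini_integrable[OF ps meas])
    have "(\<lambda>Y. \<integral>s. norm (case (Y, s) of (Y, s) \<Rightarrow> G Y s) \<partial>lborel) = (\<lambda>Y. cnt Y * f y / Z Y)"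
    proof
      fix Y
      have "(\<lambda>s. norm (G Y s)) = G Y"
        using cnt0[of Y] fy by (auto simp: G_def fun_eq_iff indicator_def)
      then show "(\<integral>s. norm (case (Y, s) of (Y, s) \<Rightarrow> G Y s) \<partial>lborel) = cnt Y * f y / Z Y"
        using inner[of Y] by (simp add: has_bochner_integral_iff)
    qed
    moreover have "integrable M (\<lambda>Y. cnt Y * f y / Z Y)"
      unfolding M_def
      by (rule measure_pmf.integrable_const_bound[where B=1])
         (use bnd cnt0 fy Z0 in \<open>auto intro!: AE_I2\<close>)
    ultimately show "integrable M (\<lambda>Y. \<integral>s. norm (case (Y, s) of (Y, s) \<Rightarrow> G Y s) \<partial>lborel)" by simp
    show "AE Y in M. integrable lborel (\<lambda>s. case (Y, s) of (Y, s) \<Rightarrow> G Y s)"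
      using inner by (auto simp: has_bochner_integral_iff)
  qed
  have "measure_pmf.expectation (Pi_pmf {..<k} d (\<lambda>_. pg))
       (\<lambda>Y. real (card {j\<in>{..<k}. Y j = y}) * f y / (\<Sum>j<k. f (Y j)))
      = (\<integral>Y. (\<integral>s. G Y s \<partial>lborel) \<partial>M)"
    unfolding M_def using inner by (intro Bochner_Integration.integral_cong) (auto simp: has_bochner_integral_iff cnt_def Z_def)
  also have "\<dots> = (\<integral>s. (\<integral>Y. G Y s \<partial>M) \<partial>lborel)"
    using pair_sigma_finite.Fubini_integral[OF ps, of G] integ by simp
  also have "\<dots> = (\<integral>s. f y * real k * pmf pg y * (indicator {0..} s * (exp (- s * f y) * PhiF pg f s ^ (k-1))) \<partial>lborel)"
  proof (intro Bochner_Integration.integral_cong refl)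
    fix s :: real
    show "(\<integral>Y. G Y s \<partial>M) = f y * real k * pmf pg y * (indicator {0..} s * (exp (- s * f y) * PhiF pg f s ^ (k-1)))"
    proof (cases "s \<ge> 0")
      case True
      have "(\<integral>Y. G Y s \<partial>M) = f y * (\<integral>Y. cnt Y * exp (- s * Z Y) \<partial>M)"
      proof -
        have "(\<lambda>Y. G Y s) = (\<lambda>Y. f y * (cnt Y * exp (- s * Z Y)))" using True by (auto simp: G_def fun_eq_iff)
        then show ?thesis by (simp only: integral_mult_right_zero)
      qed
      also have "(\<integral>Y. cnt Y * exp (- s * Z Y) \<partial>M) = real k * (pmf pg y * exp (- s * f y)) * PhiF pg f s ^ (k - 1)"
        unfolding M_def cnt_def Z_def by (rule exp_cnt[OF f0 True])
      finally show ?thesis using True by simp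
    next
      case False
      then show ?thesis by (simp add: G_def)
    qed
  qed
  also have "\<dots> = f y * real k * pmf pg y * (\<integral>s. indicator {0..} s * (exp (- s * f y) * PhiF pg f s ^ (k-1)) \<partial>lborel)"
    by simp
  finally show ?thesis .
qed



lemma pmf_exp_01:
  fixes F :: "'a \<Rightarrow> real"
  assumes "\<And>x. 0 \<le> F x" "\<And>x. F x \<le> 1"
  shows "0 \<le> measure_pmf.expectation q F" "measure_pmf.expectation q F \<le> 1"
proof -
  show "0 \<le> measure_pmf.expectation q F" using assms by (intro Bochner_Integration.integral_nonneg) auto
  have "integrable (measure_pmf q) F"
    by (rule measure_pmf.integrable_const_bound[where B=1]) (use assms in \<open>auto intro!: AE_I2 simp: abs_le_iff\<close>)
  then have "measure_pmf.expectation q F \<le> measure_pmf.expectation q (\<lambda>_. 1)"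
    using assms by (intro integral_mono) auto
  then show "measure_pmf.expectation q F \<le> 1" by simp
qed

lemma cnt_bound:
  fixes f :: "'y \<Rightarrow> real" and k :: nat
  assumes f0: "\<And>z. f z \<ge> 0"
  shows "0 \<le> real (card {j\<in>{..<k}. Y j = y}) * f y / (\<Sum>j<k. f (Y j))"
        "real (card {j\<in>{..<k}. Y j = y}) * f y / (\<Sum>j<k. f (Y j)) \<le> 1"
proof -
  have "real (card {j\<in>{..<k}. Y j = y}) * f y = (\<Sum>j\<in>{j\<in>{..<k}. Y j = y}. f (Y j))" by simp
  also have "\<dots> \<le> (\<Sum>j<k. f (Y j))" by (intro sum_mono2) (auto simp: f0)
  finally have le: "real (card {j\<in>{..<k}. Y j = y}) * f y \<le> (\<Sum>j<k. f (Y j))" .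
  have n0: "0 \<le> real (card {j\<in>{..<k}. Y j = y}) * f y" using f0[of y] by simp
  show "0 \<le> real (card {j\<in>{..<k}. Y j = y}) * f y / (\<Sum>j<k. f (Y j))"
    using n0 le by simp
  show "real (card {j\<in>{..<k}. Y j = y}) * f y / (\<Sum>j<k. f (Y j)) \<le> 1"
    using n0 le by (cases "(\<Sum>j<k. f (Y j)) = 0") (auto simp: divide_le_eq)
qed



lemma main_conv:
  fixes Phi :: "real \<Rightarrow> real" and c n :: real
  assumes c: "c > 0" and n: "n > 0" and Phim[measurable]: "Phi \<in> borel_measurable borel"
    and Phib: "\<And>s. s \<ge> 0 \<Longrightarrow> 0 \<le> Phi s \<and> Phi s \<le> 1"
  shows "(\<lambda>k. pmf (N_dist n) k * (real k ^ 2 * (\<integral>s. indicator {0..} s * (exp (- s * c) * Phi s ^ (k-1)) \<partial>lborel) ^ 2))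
    sums (\<integral>s1. \<integral>s2. exp (-n) / (1 - exp (-n)) * ((n + n\<^sup>2 * (Phi s1 * Phi s2)) * exp (n * (Phi s1 * Phi s2)))
            * (indicator {0..} s1 * exp (- s1 * c)) * (indicator {0..} s2 * exp (- s2 * c)) \<partial>lborel \<partial>lborel)"
proof -
  define C0 where "C0 = exp (-n) / (1 - exp (-n))"
  have en: "exp (-n) < 1" using n by simp
  have C0pos: "C0 > 0" unfolding C0_def using en by simp
  define e where "e s = indicator {0..} s * exp (- s * c)" for s :: real
  define a where "a k s = indicator {0..} s * (exp (- s * c) * Phi s ^ (k-1))" for k :: nat and s :: real
  define I where "I k = (\<integral>s. a k s \<partial>lborel)" for k
  define w where "w k = pmf (N_dist n) k" for k
  define T where "T k s1 s2 = w k * real k ^ 2 * (a k s1 * a k s2)" for k s1 s2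
  define Sf where "Sf s1 s2 = C0 * ((n + n\<^sup>2 * (Phi s1 * Phi s2)) * exp (n * (Phi s1 * Phi s2))) * e s1 * e s2" for s1 s2
  define D where "D = C0 * ((n + n\<^sup>2) * exp n)"
  have [measurable]: "(\<lambda>(s1, s2). Sf s1 s2) \<in> borel_measurable (lborel \<Otimes>\<^sub>M lborel)"
    unfolding Sf_def e_def by measurable
  have [measurable]: "(\<lambda>(s1, s2). \<Sum>k<m. T k s1 s2) \<in> borel_measurable (lborel \<Otimes>\<^sub>M lborel)" for m
    unfolding T_def a_def by measurable
  have w_eq: "w k = (if k > 0 then n ^ k / fact k * exp (- n) / (1 - exp (- n)) else 0)" for k
    unfolding w_def by (rule pmf_N_dist[OF n])
  have w0: "w k \<ge> 0" for k unfolding w_def by simp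
  have e_int: "has_bochner_integral lborel e (1 / c)"
    unfolding e_def using exp_int[OF c] .
  have e0: "e s \<ge> 0" for s unfolding e_def by simp
  have a0: "a k s \<ge> 0" for k s
    unfolding a_def using Phib[of s] by (auto simp: indicator_def)
  have a_int: "integrable lborel (a k)" for k
  proof -
    have "integrable lborel (\<lambda>s. indicator {0..} s * (exp (- s * c) * Phi s ^ (k-1)))"
    proof (rule exp_int_bound[OF c, where B=1])
      fix s :: real assume s: "s \<ge> 0"
      have "\<bar>Phi s ^ (k-1)\<bar> \<le> 1" using Phib[OF s] by (simp add: power_le_one)
      then show "\<bar>exp (- s * c) * Phi s ^ (k-1)\<bar> \<le> 1 * exp (- s * c)"
        by (simp add: abs_mult mult_left_le)
    qed measurable
    then show ?thesis unfolding a_def .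
  qed
  have T0: "T k s1 s2 \<ge> 0" for k s1 s2 unfolding T_def using w0 a0 by simp
  have term_eq: "w k * (real k ^ 2 * I k ^ 2) = (\<integral>s1. \<integral>s2. T k s1 s2 \<partial>lborel \<partial>lborel)" for k
  proof -
    have "(\<integral>s1. \<integral>s2. T k s1 s2 \<partial>lborel \<partial>lborel) = (\<integral>s1. (w k * real k ^ 2 * a k s1) * I k \<partial>lborel)"
      unfolding T_def I_def by (simp add: mult.assoc)
    also have "\<dots> = w k * real k ^ 2 * I k * I k" unfolding I_def by simp
    finally show ?thesis by (simp add: power2_eq_square mult_ac)
  qed
  have lin: "(\<Sum>k<m. w k * (real k ^ 2 * I k ^ 2)) = (\<integral>s1. \<integral>s2. (\<Sum>k<m. T k s1 s2) \<partial>lborel \<partial>lborel)" for m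
  proof -
    have Tint: "integrable lborel (\<lambda>s2. T k s1 s2)" for k s1
      unfolding T_def by (intro integrable_mult_right a_int)
    have "(\<integral>s1. \<integral>s2. (\<Sum>k<m. T k s1 s2) \<partial>lborel \<partial>lborel) = (\<integral>s1. (\<Sum>k<m. \<integral>s2. T k s1 s2 \<partial>lborel) \<partial>lborel)"
      by (intro Bochner_Integration.integral_cong refl Bochner_Integration.integral_sum Tint)
    also have "\<dots> = (\<Sum>k<m. \<integral>s1. \<integral>s2. T k s1 s2 \<partial>lborel \<partial>lborel)"
    proof (intro Bochner_Integration.integral_sum)
      fix k
      have "(\<lambda>s1. \<integral>s2. T k s1 s2 \<partial>lborel) = (\<lambda>s1. (w k * real k ^ 2 * I k) * a k s1)"
        unfolding T_def I_def by (auto simp: fun_eq_iff mult_ac)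
      then show "integrable lborel (\<lambda>s1. \<integral>s2. T k s1 s2 \<partial>lborel)"
        using a_int[of k] by simp
    qed
    finally show ?thesis using term_eq by simp
  qed
  have Tsums: "(\<lambda>k. T k s1 s2) sums Sf s1 s2" for s1 s2
  proof -
    let ?x = "Phi s1 * Phi s2"
    have "(\<lambda>k. (C0 * e s1 * e s2) * (real k ^ 2 * n ^ k / fact k * ?x ^ (k - 1))) sums
          ((C0 * e s1 * e s2) * ((n + n\<^sup>2 * ?x) * exp (n * ?x)))"
      by (intro sums_mult sums_k2)
    moreover have "(C0 * e s1 * e s2) * (real k ^ 2 * n ^ k / fact k * ?x ^ (k - 1)) = T k s1 s2" for k
    proof (cases "k = 0")
      case True then show ?thesis by (simp add: T_def)
    next
      case False
      have "a k s1 * a k s2 = e s1 * e s2 * ?x ^ (k - 1)"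
        unfolding a_def e_def by (simp add: power_mult_distrib mult_ac)
      then show ?thesis using False unfolding T_def w_eq C0_def by (simp add: mult_ac)
    qed
    moreover have "(C0 * e s1 * e s2) * ((n + n\<^sup>2 * ?x) * exp (n * ?x)) = Sf s1 s2"
      unfolding Sf_def by (simp add: mult_ac)
    ultimately show ?thesis by simp
  qed
  have lim_pt: "(\<lambda>m. \<Sum>k<m. T k s1 s2) \<longlonglongrightarrow> Sf s1 s2" for s1 s2
    using Tsums[of s1 s2] by (simp add: sums_def)
  have Sf_bound: "Sf s1 s2 \<le> D * e s1 * e s2" for s1 s2
  proof (cases "s1 \<ge> 0 \<and> s2 \<ge> 0")
    case True
    then have x0: "0 \<le> Phi s1 * Phi s2" and x1: "Phi s1 * Phi s2 \<le> 1"
      using Phib[of s1] Phib[of s2] by (auto intro: mult_le_one)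
    have "(n + n\<^sup>2 * (Phi s1 * Phi s2)) * exp (n * (Phi s1 * Phi s2)) \<le> (n + n\<^sup>2) * exp n"
    proof (rule mult_mono)
      show "n + n\<^sup>2 * (Phi s1 * Phi s2) \<le> n + n\<^sup>2" using x1 by (simp add: mult_left_le)
      show "exp (n * (Phi s1 * Phi s2)) \<le> exp n" using x1 n by (simp add: mult_left_le)
      show "0 \<le> n + n\<^sup>2" using n by simp
    qed simp
    then have "C0 * ((n + n\<^sup>2 * (Phi s1 * Phi s2)) * exp (n * (Phi s1 * Phi s2))) \<le> D"
      unfolding D_def using C0pos by (simp add: mult_left_mono)
    then show ?thesis unfolding Sf_def using e0[of s1] e0[of s2]
      by (simp add: mult_right_mono mult.assoc[symmetric])
  next
    case False
    then have "e s1 * e s2 = 0" unfolding e_def by auto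
    then have "Sf s1 s2 = 0" unfolding Sf_def by (simp only: mult.assoc mult_zero_right)
    moreover have "0 \<le> D" unfolding D_def using C0pos n by simp
    ultimately show ?thesis using e0[of s1] e0[of s2] by simp
  qed
  have ps_bound: "\<bar>\<Sum>k<m. T k s1 s2\<bar> \<le> D * e s1 * e s2" for m s1 s2
  proof -
    have "(\<Sum>k<m. T k s1 s2) \<le> Sf s1 s2"
      using sum_le_suminf[of "\<lambda>k. T k s1 s2" "{..<m}"] Tsums[of s1 s2] T0
      by (simp add: sums_iff)
    moreover have "0 \<le> (\<Sum>k<m. T k s1 s2)" using T0 by (simp add: sum_nonneg)
    ultimately show ?thesis using Sf_bound[of s1 s2] by simp
  qed
  have inner_int: "integrable lborel (\<lambda>s2. \<Sum>k<m. T k s1 s2)" for m s1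
    by (intro Bochner_Integration.integrable_sum) (unfold T_def, intro integrable_mult_right a_int)
  have wint: "integrable lborel (\<lambda>s2. D * e s1 * e s2)" for s1
    using e_int by (intro integrable_mult_right) (simp add: has_bochner_integral_iff)
  have inner_lim: "(\<lambda>m. \<integral>s2. (\<Sum>k<m. T k s1 s2) \<partial>lborel) \<longlonglongrightarrow> (\<integral>s2. Sf s1 s2 \<partial>lborel)" for s1
  proof (rule integral_dominated_convergence[OF _ _ wint])
    show "AE s2 in lborel. (\<lambda>m. \<Sum>k<m. T k s1 s2) \<longlonglongrightarrow> Sf s1 s2" using lim_pt by simp
    show "AE s2 in lborel. norm (\<Sum>k<m. T k s1 s2) \<le> D * e s1 * e s2" for m
      using ps_bound by simp
  qed measurable
  have inner_bound: "\<bar>\<integral>s2. (\<Sum>k<m. T k s1 s2) \<partial>lborel\<bar> \<le> D / c * e s1" for m s1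
  proof -
    have "\<bar>\<integral>s2. (\<Sum>k<m. T k s1 s2) \<partial>lborel\<bar> \<le> (\<integral>s2. D * e s1 * e s2 \<partial>lborel)"
      by (rule integral_abs_bound_integral[OF inner_int wint ps_bound])
    also have "\<dots> = D * e s1 * (1 / c)"
      using e_int by (simp add: has_bochner_integral_iff)
    finally show ?thesis by simp
  qed
  have wint2: "integrable lborel (\<lambda>s1. D / c * e s1)"
    using e_int by (intro integrable_mult_right) (simp add: has_bochner_integral_iff)
  have outer_lim: "(\<lambda>m. \<integral>s1. \<integral>s2. (\<Sum>k<m. T k s1 s2) \<partial>lborel \<partial>lborel) \<longlonglongrightarrow> (\<integral>s1. \<integral>s2. Sf s1 s2 \<partial>lborel \<partial>lborel)"
  proof (rule integral_dominated_convergence[OF _ _ wint2])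
    show "AE s1 in lborel. (\<lambda>m. \<integral>s2. (\<Sum>k<m. T k s1 s2) \<partial>lborel) \<longlonglongrightarrow> (\<integral>s2. Sf s1 s2 \<partial>lborel)"
      using inner_lim by simp
    show "AE s1 in lborel. norm (\<integral>s2. (\<Sum>k<m. T k s1 s2) \<partial>lborel) \<le> D / c * e s1" for m
      using inner_bound by simp
  qed measurable
  have "(\<lambda>k. w k * (real k ^ 2 * I k ^ 2)) sums (\<integral>s1. \<integral>s2. Sf s1 s2 \<partial>lborel \<partial>lborel)"
    unfolding sums_def lin using outer_lim .
  then show ?thesis unfolding w_def I_def a_def Sf_def e_def C0_def .
qed



theorem lemmaD2:
  fixes pt pg :: "'y::countable pmf" and r :: "'y \<Rightarrow> real" and \<beta> n :: real and y :: 'y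
  assumes "\<beta> > 0" and "n > 0"
    and "\<And>z. pmf pg z > 0"
  shows "measure_pmf.expectation (N_dist n) (\<lambda>k. (pihat pt pg r \<beta> k y)\<^sup>2)
    = (phi_beta pt pg r \<beta> y)\<^sup>2 / (1 - exp (- n)) *
      (LBINT s1:{0..}. LBINT s2:{0..}.
         (n + n\<^sup>2 * Phi_beta pt pg r \<beta> s1 * Phi_beta pt pg r \<beta> s2) * (pmf pg y)\<^sup>2
         * exp (- (s1 + s2) * phi_beta pt pg r \<beta> y)
         * exp (n * (Phi_beta pt pg r \<beta> s1 * Phi_beta pt pg r \<beta> s2 - 1)))"
proof -
  note n = \<open>n > 0\<close>
  define f where "f = phi_beta pt pg r \<beta>"
  define Phi where "Phi = PhiF pg f"
  define c where "c = f y"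
  define p where "p = pmf pg y"
  have f0: "f z \<ge> 0" for z
    unfolding f_def phi_beta_def using assms(3)[of z] by simp
  have PhiB: "Phi_beta pt pg r \<beta> = Phi"
    unfolding Phi_def PhiF_def[abs_def] Phi_beta_def[abs_def] f_def ..
  have pihat_eq: "pihat pt pg r \<beta> k y = measure_pmf.expectation (Pi_pmf {..<k} undefined (\<lambda>_. pg))
       (\<lambda>Y. real (card {j\<in>{..<k}. Y j = y}) * f y / (\<Sum>j<k. f (Y j)))" for k
    unfolding pihat_def f_def ..
  have pihat01: "0 \<le> pihat pt pg r \<beta> k y" "pihat pt pg r \<beta> k y \<le> 1" for k
    unfolding pihat_eq by (rule pmf_exp_01; rule cnt_bound[OF f0])+
  have pb: "\<bar>(pihat pt pg r \<beta> k y)\<^sup>2\<bar> \<le> 1" for k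
    using pihat01[of k] by (simp add: power_le_one abs_le_iff)
  have Lsums: "(\<lambda>k. pmf (N_dist n) k * (pihat pt pg r \<beta> k y)\<^sup>2) sums
      measure_pmf.expectation (N_dist n) (\<lambda>k. (pihat pt pg r \<beta> k y)\<^sup>2)"
    by (rule pmf_expectation_sums[OF pb])
  show ?thesis
  proof (cases "c = 0")
    case True
    have "pihat pt pg r \<beta> k y = 0" for k
      unfolding pihat_eq using True by (simp add: c_def)
    then show ?thesis using True by (simp add: c_def f_def)
  next
    case False
    then have c: "c > 0" using f0[of y] unfolding c_def by simp
    have Phim: "Phi \<in> borel_measurable borel" unfolding Phi_def by (rule PhiF_meas)
    have Phib: "0 \<le> Phi s \<and> Phi s \<le> 1" if "s \<ge> 0" for s
      unfolding Phi_def using PhiF_bounds[where f=f and pg=pg and s=s, OF f0 that] by simp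
    define V where "V = (\<integral>s1. \<integral>s2. exp (-n) / (1 - exp (-n)) * ((n + n\<^sup>2 * (Phi s1 * Phi s2)) * exp (n * (Phi s1 * Phi s2)))
            * (indicator {0..} s1 * exp (- s1 * c)) * (indicator {0..} s2 * exp (- s2 * c)) \<partial>lborel \<partial>lborel)"
    define I where "I k = (\<integral>s. indicator {0..} s * (exp (- s * c) * Phi s ^ (k-1)) \<partial>lborel)" for k :: nat
    have Msums: "(\<lambda>k. pmf (N_dist n) k * (real k ^ 2 * I k ^ 2)) sums V"
      unfolding V_def I_def by (rule main_conv[OF c n Phim Phib])
    have pf: "pihat pt pg r \<beta> k y = c * real k * p * I k" for k
      unfolding pihat_eq I_def c_def p_def Phi_def using pihat_formula[where f=f and y=y and pg=pg and k=k and d=undefined, OF f0 c[unfolded c_def]] .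
    have "(\<lambda>k. (c\<^sup>2 * p\<^sup>2) * (pmf (N_dist n) k * (real k ^ 2 * I k ^ 2))) sums ((c\<^sup>2 * p\<^sup>2) * V)"
      by (rule sums_mult[OF Msums])
    moreover have "(c\<^sup>2 * p\<^sup>2) * (pmf (N_dist n) k * (real k ^ 2 * I k ^ 2)) = pmf (N_dist n) k * (pihat pt pg r \<beta> k y)\<^sup>2" for k
      unfolding pf by (simp add: power_mult_distrib mult_ac)
    ultimately have Lval: "measure_pmf.expectation (N_dist n) (\<lambda>k. (pihat pt pg r \<beta> k y)\<^sup>2) = (c\<^sup>2 * p\<^sup>2) * V"
      using Lsums sums_unique2 by force
    define K where "K = c\<^sup>2 / (1 - exp (- n))"
    define F where "F s1 s2 = (n + n\<^sup>2 * Phi s1 * Phi s2) * p\<^sup>2 * exp (- (s1 + s2) * c) * exp (n * (Phi s1 * Phi s2 - 1))" for s1 s2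
    have pw: "(c\<^sup>2 * p\<^sup>2) * (exp (-n) / (1 - exp (-n)) * ((n + n\<^sup>2 * (Phi s1 * Phi s2)) * exp (n * (Phi s1 * Phi s2)))
            * (indicator {0..} s1 * exp (- s1 * c)) * (indicator {0..} s2 * exp (- s2 * c)))
        = K * (indicator {0..} s1 * (indicator {0..} s2 * F s1 s2))" for s1 s2
    proof -
      have e1: "exp (n * (Phi s1 * Phi s2 - 1)) = exp (-n) * exp (n * (Phi s1 * Phi s2))"
        by (simp add: exp_add[symmetric] algebra_simps)
      have e2: "exp (- (s1 + s2) * c) = exp (- s1 * c) * exp (- s2 * c)"
        by (simp add: exp_add[symmetric] algebra_simps)
      show ?thesis unfolding K_def F_def e1 e2 by (simp add: field_simps)
    qed
    have "(c\<^sup>2 * p\<^sup>2) * V = (\<integral>s1. \<integral>s2. K * (indicator {0..} s1 * (indicator {0..} s2 * F s1 s2)) \<partial>lborel \<partial>lborel)"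
      unfolding V_def pw[symmetric] by (simp only: integral_mult_right_zero)
    also have "\<dots> = K * (\<integral>s1. indicator {0..} s1 * (\<integral>s2. indicator {0..} s2 * F s1 s2 \<partial>lborel) \<partial>lborel)"
      by (simp only: integral_mult_right_zero)
    also have "\<dots> = K * (LBINT s1:{0..}. LBINT s2:{0..}. F s1 s2)"
      by (simp add: set_lebesgue_integral_def)
    finally show ?thesis unfolding Lval K_def F_def PhiB c_def f_def p_def
      by (simp add: mult.assoc)
  qed
qed

end
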